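(* Let $G$ be a graph, let $\mathcal{P}=(X_1,\ldots,X_l)$ be a path decomposition of width $k$ of $G$, and let $S\subseteq V(G)$ be such that the number $c$ of $S$-branches satisfies $c>k$. Let $H_1,\ldots,H_c$ be the $S$-branches indexed so that $\alpha(H_1)\leq\cdots\leq\alpha(H_c)$, and let $H^1,\ldots,H^c$ be the $S$-branches indexed so that $\beta(H^1)\leq\cdots\leq\beta(H^c)$. Then (i) $\alpha(H_i)\geq\alpha(x)$ for all $i\geq k+1$ and all $x\in S$; (ii) $\beta(H^i)\leq\beta(x)$ for all $i\leq c-k$ and all $x\in S$.
   Context: A path decomposition of $G$ is a sequence $(X_1,\ldots,X_l)$ of subsets of $V(G)$ covering $V(G)$, such that every edge lies in some $X_i$, and $X_i\cap X_k\subseteq X_j$ whenever $i\leq j\leq k$; its width is $\max_i|X_i|-1$. For a subgraph $H$ (or vertex $v$, viewed as a one-vertex subgraph), $\alpha(H)=\min\{i: X_i\cap V(H)\neq\emptyset\}$ and $\beta(H)=\max\{i: X_i\cap V(H)\neq\emptyset\}$. For $S\subseteq V(G)$, an $S$-component is a connected component $H$ of $G-S$ such that every vertex of $S$ has a neighbor in $V(H)$; an $S$-branch is an $S$-component with at least two vertices. *)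

theory Defs
  imports Main
begin

definition graph :: "'a set \<Rightarrow> ('a \<Rightarrow> 'a \<Rightarrow> bool) \<Rightarrow> bool" where
  "graph V E \<longleftrightarrow> finite V \<and> (\<forall>u v. E u v \<longrightarrow> u \<in> V \<and> v \<in> V \<and> u \<noteq> v \<and> E v u)"

definition path_decomposition ::
  "'a set \<Rightarrow> ('a \<Rightarrow> 'a \<Rightarrow> bool) \<Rightarrow> (nat \<Rightarrow> 'a set) \<Rightarrow> nat \<Rightarrow> bool" where
  "path_decomposition V E X l \<longleftrightarrow>
     (\<forall>i\<in>{1..l}. X i \<subseteq> V) \<and>
     (\<Union>i\<in>{1..l}. X i) = V \<and>
     (\<forall>u v. E u v \<longrightarrow> (\<exists>i\<in>{1..l}. u \<in> X i \<and> v \<in> X i)) \<and>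
     (\<forall>i j m. 1 \<le> i \<and> i \<le> j \<and> j \<le> m \<and> m \<le> l \<longrightarrow> X i \<inter> X m \<subseteq> X j)"

definition pd_width :: "(nat \<Rightarrow> 'a set) \<Rightarrow> nat \<Rightarrow> nat" where
  "pd_width X l = Max ((\<lambda>i. card (X i)) ` {1..l}) - 1"

text \<open>alpha and beta of a vertex set H (a subgraph, or a single vertex as {x}).\<close>
definition pd_alpha :: "(nat \<Rightarrow> 'a set) \<Rightarrow> nat \<Rightarrow> 'a set \<Rightarrow> nat" where
  "pd_alpha X l H = Min {i\<in>{1..l}. X i \<inter> H \<noteq> {}}"

definition pd_beta :: "(nat \<Rightarrow> 'a set) \<Rightarrow> nat \<Rightarrow> 'a set \<Rightarrow> nat" where
  "pd_beta X l H = Max {i\<in>{1..l}. X i \<inter> H \<noteq> {}}"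

definition comp_of :: "'a set \<Rightarrow> ('a \<Rightarrow> 'a \<Rightarrow> bool) \<Rightarrow> 'a set \<Rightarrow> 'a \<Rightarrow> 'a set" where
  "comp_of V E S v =
     {w. (\<lambda>x y. E x y \<and> x \<in> V - S \<and> y \<in> V - S)\<^sup>*\<^sup>* v w}"

definition S_components :: "'a set \<Rightarrow> ('a \<Rightarrow> 'a \<Rightarrow> bool) \<Rightarrow> 'a set \<Rightarrow> 'a set set" where
  "S_components V E S =
     {C. (\<exists>v\<in>V - S. C = comp_of V E S v) \<and> (\<forall>x\<in>S. \<exists>y\<in>C. E x y)}"

definition S_branches :: "'a set \<Rightarrow> ('a \<Rightarrow> 'a \<Rightarrow> bool) \<Rightarrow> 'a set \<Rightarrow> 'a set set" where
  "S_branches V E S = {C \<in> S_components V E S. card C \<ge> 2}"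

end

theory Submission
  imports Defs
begin

definition rel :: "'a set \<Rightarrow> ('a \<Rightarrow> 'a \<Rightarrow> bool) \<Rightarrow> 'a set \<Rightarrow> 'a \<Rightarrow> 'a \<Rightarrow> bool" where
  "rel V E S = (\<lambda>x y. E x y \<and> x \<in> V - S \<and> y \<in> V - S)"

lemma comp_of_rel: "comp_of V E S v = {w. (rel V E S)\<^sup>*\<^sup>* v w}"
  unfolding comp_of_def rel_def by simp

lemma rel_sym:
  assumes g: "graph V E" and r: "(rel V E S)\<^sup>*\<^sup>* u w" shows "(rel V E S)\<^sup>*\<^sup>* w u"
  using r
proof (induction rule: rtranclp_induct)
  case base then show ?case by simp
next
  case (step y z)
  have "E z y" using step(2) g unfolding rel_def graph_def by blast
  then have "rel V E S z y" using step(2) unfolding rel_def by simp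
  then show ?case using step.IH
    by (meson converse_rtranclp_into_rtranclp)
qed

lemma comp_mem_VS: "v \<in> V - S \<Longrightarrow> w \<in> comp_of V E S v \<Longrightarrow> w \<in> V - S"
proof -
  assume v: "v \<in> V - S" and "w \<in> comp_of V E S v"
  then have "(rel V E S)\<^sup>*\<^sup>* v w" unfolding comp_of_rel by simp
  then show "w \<in> V - S"
  proof (induction rule: rtranclp_induct)
    case base then show ?case using v .
  next
    case (step y z) then show ?case unfolding rel_def by simp
  qed
qed

lemma side:
  assumes "path_decomposition V E X l" "w \<in> X a" "w \<in> X b" "1 \<le> a" "a < j" "j < b" "b \<le> l"
  shows "w \<in> X j"
proof -
  have "\<forall>i j m. 1 \<le> i \<and> i \<le> j \<and> j \<le> m \<and> m \<le> l \<longrightarrow> X i \<inter> X m \<subseteq> X j"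
    using assms(1) unfolding path_decomposition_def by simp
  then have "X a \<inter> X b \<subseteq> X j" using assms(4-7) by simp
  then show ?thesis using assms(2,3) by blast
qed

lemma reach_left:
  assumes pd: "path_decomposition V E X l"
    and r: "(rel V E S)\<^sup>*\<^sup>* u w"
    and ua: "u \<in> X a" "1 \<le> a" "a < j" "j \<le> l"
    and no: "\<forall>z. (rel V E S)\<^sup>*\<^sup>* u z \<longrightarrow> z \<notin> X j"
  shows "\<forall>b\<in>{1..l}. w \<in> X b \<longrightarrow> b < j"
  using r
proof (induction rule: rtranclp_induct)
  case base
  show ?case
  proof (intro ballI impI)
    fix b assume b: "b \<in> {1..l}" "u \<in> X b"
    show "b < j"
    proof (rule ccontr)
      assume "\<not> b < j"
      then have "b = j \<or> j < b" by auto
      then have "u \<in> X j" using side[OF pd ua(1) b(2) ua(2) ua(3)] b by auto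
      then show False using no by blast
    qed
  qed
next
  case (step y z)
  have Eyz: "E y z" using step(2) unfolding rel_def by auto
  have ed: "\<forall>u v. E u v \<longrightarrow> (\<exists>i\<in>{1..l}. u \<in> X i \<and> v \<in> X i)"
    using pd unfolding path_decomposition_def by simp
  obtain e where e: "e \<in> {1..l}" "y \<in> X e" "z \<in> X e"
    using ed Eyz by blast
  have ej: "e < j" using step.IH e(1,2) by blast
  have rz: "(rel V E S)\<^sup>*\<^sup>* u z" by (rule rtranclp.rtrancl_into_rtrancl[OF step(1,2)])
  show ?case
  proof (intro ballI impI)
    fix b assume b: "b \<in> {1..l}" "z \<in> X b"
    show "b < j"
    proof (rule ccontr)
      assume "\<not> b < j"
      then have "b = j \<or> j < b" by auto
      moreover have "j < b \<Longrightarrow> z \<in> X j" using side[OF pd e(3) b(2) _ ej] e(1) b(1) by simp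
      ultimately have "z \<in> X j" using b by auto
      then show False using no rz by blast
    qed
  qed
qed

lemma crossing:
  assumes pd: "path_decomposition V E X l"
    and r: "(rel V E S)\<^sup>*\<^sup>* u y"
    and "u \<in> X a" "1 \<le> a" "a < j" "y \<in> X b" "j < b" "b \<le> l"
  shows "\<exists>z. (rel V E S)\<^sup>*\<^sup>* u z \<and> z \<in> X j"
proof (rule ccontr)
  assume "\<not> ?thesis"
  then have "\<forall>b\<in>{1..l}. y \<in> X b \<longrightarrow> b < j"
    using reach_left[OF pd r assms(3-5)] assms by auto
  then show False using assms by auto
qed

lemma branch_comp:
  assumes "H \<in> S_branches V E S"
  obtains v where "v \<in> V - S" "H = comp_of V E S v"
  using assms unfolding S_branches_def S_components_def by auto

lemma meets:
  assumes g: "graph V E" and pd: "path_decomposition V E X l"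
    and H: "H \<in> S_branches V E S"
    and "u \<in> H" "u \<in> X a" "y \<in> H" "y \<in> X b" "1 \<le> a" "a \<le> j" "j \<le> b" "b \<le> l"
  shows "H \<inter> X j \<noteq> {}"
proof -
  obtain v where v: "v \<in> V - S" "H = comp_of V E S v" using branch_comp[OF H] by blast
  have ru: "(rel V E S)\<^sup>*\<^sup>* v u" and ry: "(rel V E S)\<^sup>*\<^sup>* v y"
    using assms v unfolding comp_of_rel by auto
  have uy: "(rel V E S)\<^sup>*\<^sup>* u y" using rel_sym[OF g ru] ry by auto
  show ?thesis
  proof (cases "a = j \<or> b = j")
    case True then show ?thesis using assms by auto
  next
    case False
    then have "a < j" "j < b" using assms by auto
    then obtain z where "(rel V E S)\<^sup>*\<^sup>* u z" "z \<in> X j"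
      using crossing[OF pd uy assms(5,8) _ assms(7) _ assms(11)] by blast
    then have "z \<in> H" using ru v unfolding comp_of_rel by auto
    then show ?thesis using \<open>z \<in> X j\<close> by auto
  qed
qed

lemma branch_disj:
  assumes g: "graph V E" and "C \<in> S_branches V E S" "D \<in> S_branches V E S" "w \<in> C" "w \<in> D"
  shows "C = D"
proof -
  obtain v where v: "v \<in> V - S" "C = comp_of V E S v" using branch_comp[OF assms(2)] by blast
  obtain v' where v': "v' \<in> V - S" "D = comp_of V E S v'" using branch_comp[OF assms(3)] by blast
  have a: "(rel V E S)\<^sup>*\<^sup>* v w" "(rel V E S)\<^sup>*\<^sup>* v' w" using assms v v' unfolding comp_of_rel by auto
  have "(rel V E S)\<^sup>*\<^sup>* v v'" using a(1) rel_sym[OF g a(2)] by auto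
  moreover have "(rel V E S)\<^sup>*\<^sup>* v' v" using rel_sym[OF g] calculation by auto
  ultimately show ?thesis unfolding v v' comp_of_rel
    by (auto intro: rtranclp_trans)
qed

lemma branch_sub: "H \<in> S_branches V E S \<Longrightarrow> H \<subseteq> V - S"
  by (metis branch_comp comp_mem_VS subsetI)

lemma branch_ne: "H \<in> S_branches V E S \<Longrightarrow> H \<noteq> {}"
  by (metis branch_comp comp_of_rel mem_Collect_eq rtranclp.rtrancl_refl empty_iff)

lemma branch_nb: "H \<in> S_branches V E S \<Longrightarrow> x \<in> S \<Longrightarrow> \<exists>y\<in>H. E x y"
  unfolding S_branches_def S_components_def by auto

lemma counting:
  assumes g: "graph V E" and pd: "path_decomposition V E X l" and w: "pd_width X l = k"
    and j: "j \<in> {1..l}" and x: "x \<in> X j" "x \<in> S"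
    and I: "finite I" "card I \<ge> k+1" and inj: "inj_on H I"
    and Hb: "\<forall>m\<in>I. H m \<in> S_branches V E S"
    and meet: "\<forall>m\<in>I. H m \<inter> X j \<noteq> {}"
  shows False
proof -
  have "\<forall>m\<in>I. \<exists>z. z \<in> H m \<inter> X j" using meet by blast
  from bchoice[OF this] obtain y where y: "\<forall>m\<in>I. y m \<in> H m \<inter> X j" by blast
  have injy: "inj_on y I"
  proof (rule inj_onI)
    fix m m' assume "m \<in> I" "m' \<in> I" "y m = y m'"
    then have "y m \<in> H m" "y m \<in> H m'" using y by auto
    then have "H m = H m'" using branch_disj[OF g, of "H m" S "H m'" "y m"] Hb \<open>m \<in> I\<close> \<open>m' \<in> I\<close> by blast
    then show "m = m'" using inj \<open>m \<in> I\<close> \<open>m' \<in> I\<close> by (meson inj_onD)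
  qed
  have xn: "x \<notin> y ` I"
  proof
    assume "x \<in> y ` I"
    then obtain m where m: "m \<in> I" "x = y m" by blast
    then have "x \<in> H m" using y by auto
    then have "x \<in> V - S" using branch_sub Hb m(1) by blast
    then show False using x(2) by blast
  qed
  have sub: "insert x (y ` I) \<subseteq> X j" using y x by auto
  have "X j \<subseteq> V" using pd j unfolding path_decomposition_def by blast
  then have fin: "finite (X j)" using g unfolding graph_def by (blast intro: finite_subset)
  have "card (insert x (y ` I)) = card I + 1"
    using xn I(1) injy by (simp add: card_image)
  then have c1: "card (X j) \<ge> k + 2" using card_mono[OF fin sub] I by simp
  have "card (X j) \<le> Max ((\<lambda>i. card (X i)) ` {1..l})" using j by auto
  then have "card (X j) \<le> k + 1" using w unfolding pd_width_def by linarith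
  then show False using c1 by simp
qed

lemma alpha_props:
  assumes pd: "path_decomposition V E X l" and ne: "H \<noteq> {}" "H \<subseteq> V"
  shows "pd_alpha X l H \<in> {1..l}" "X (pd_alpha X l H) \<inter> H \<noteq> {}"
    "\<And>i. i \<in> {1..l} \<Longrightarrow> X i \<inter> H \<noteq> {} \<Longrightarrow> pd_alpha X l H \<le> i"
    "pd_beta X l H \<in> {1..l}" "X (pd_beta X l H) \<inter> H \<noteq> {}"
    "\<And>i. i \<in> {1..l} \<Longrightarrow> X i \<inter> H \<noteq> {} \<Longrightarrow> i \<le> pd_beta X l H"
proof -
  let ?A = "{i\<in>{1..l}. X i \<inter> H \<noteq> {}}"
  obtain h where h: "h \<in> H" using ne by auto
  then have "h \<in> V" using ne by auto
  then obtain i where "i \<in> {1..l}" "h \<in> X i" using pd unfolding path_decomposition_def by blast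
  then have nA: "?A \<noteq> {}" using h by auto
  have fA: "finite ?A" by auto
  show "pd_alpha X l H \<in> {1..l}" "X (pd_alpha X l H) \<inter> H \<noteq> {}"
    using Min_in[OF fA nA] unfolding pd_alpha_def by auto
  show "\<And>i. i \<in> {1..l} \<Longrightarrow> X i \<inter> H \<noteq> {} \<Longrightarrow> pd_alpha X l H \<le> i"
    unfolding pd_alpha_def using fA by auto
  show "pd_beta X l H \<in> {1..l}" "X (pd_beta X l H) \<inter> H \<noteq> {}"
    using Max_in[OF fA nA] unfolding pd_beta_def by auto
  show "\<And>i. i \<in> {1..l} \<Longrightarrow> X i \<inter> H \<noteq> {} \<Longrightarrow> i \<le> pd_beta X l H"
    unfolding pd_beta_def using fA by auto
qed

theorem mainTheorem12:
  fixes V :: "'a set" and E :: "'a \<Rightarrow> 'a \<Rightarrow> bool" and X :: "nat \<Rightarrow> 'a set"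
    and l k c :: nat and S :: "'a set"
    and Hl Hu :: "nat \<Rightarrow> 'a set"
  assumes "graph V E"
    and "path_decomposition V E X l"
    and "pd_width X l = k"
    and "S \<subseteq> V"
    and "c = card (S_branches V E S)"
    and "c > k"
    and "bij_betw Hl {1..c} (S_branches V E S)"
    and "\<forall>i j. 1 \<le> i \<and> i \<le> j \<and> j \<le> c \<longrightarrow> pd_alpha X l (Hl i) \<le> pd_alpha X l (Hl j)"
    and "bij_betw Hu {1..c} (S_branches V E S)"
    and "\<forall>i j. 1 \<le> i \<and> i \<le> j \<and> j \<le> c \<longrightarrow> pd_beta X l (Hu i) \<le> pd_beta X l (Hu j)"
  shows "(\<forall>i\<in>{k+1..c}. \<forall>x\<in>S. pd_alpha X l (Hl i) \<ge> pd_alpha X l {x})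
       \<and> (\<forall>i\<in>{1..c-k}. \<forall>x\<in>S. pd_beta X l (Hu i) \<le> pd_beta X l {x})"
proof
  note g = assms(1) and pd = assms(2)
  have bsV: "\<And>H. H \<in> S_branches V E S \<Longrightarrow> H \<subseteq> V" using branch_sub by blast
  have nb: "\<And>x y. E x y \<Longrightarrow> \<exists>e\<in>{1..l}. x \<in> X e \<and> y \<in> X e"
    using pd unfolding path_decomposition_def by blast
  show "\<forall>i\<in>{k+1..c}. \<forall>x\<in>S. pd_alpha X l (Hl i) \<ge> pd_alpha X l {x}"
  proof (intro ballI, rule ccontr)
    fix i x assume i: "i \<in> {k+1..c}" and x: "x \<in> S" and lt: "\<not> pd_alpha X l (Hl i) \<ge> pd_alpha X l {x}"
    define j where "j = pd_alpha X l {x}"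
    have xV: "{x} \<subseteq> V" using x assms(4) by auto
    note ax = alpha_props[OF pd insert_not_empty xV]
    have j: "j \<in> {1..l}" "x \<in> X j" using ax(1,2) unfolding j_def by auto
    show False
    proof (rule counting[OF g pd assms(3) j(1) j(2) x, of "{1..i}" Hl])
      show "finite {1..i}" "k+1 \<le> card {1..i}" using i by auto
      have "{1..i} \<subseteq> {1..c}" using i by auto
      then show "inj_on Hl {1..i}" using inj_on_subset[OF bij_betw_imp_inj_on[OF assms(7)]] by blast
      show Hb: "\<forall>m\<in>{1..i}. Hl m \<in> S_branches V E S" using assms(7) i
        by (auto simp: bij_betw_def)
      show "\<forall>m\<in>{1..i}. Hl m \<inter> X j \<noteq> {}"
      proof
        fix m assume m: "m \<in> {1..i}"
        have H: "Hl m \<in> S_branches V E S" using Hb m by auto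
        note aH = alpha_props[OF pd branch_ne[OF H] bsV[OF H]]
        have "pd_alpha X l (Hl m) \<le> pd_alpha X l (Hl i)" using assms(8)[rule_format, of m i] m i by simp
        then have am: "pd_alpha X l (Hl m) < j" using lt unfolding j_def by simp
        obtain u where u: "u \<in> Hl m" "u \<in> X (pd_alpha X l (Hl m))" using aH(2) by auto
        obtain y where y: "y \<in> Hl m" "E x y" using branch_nb[OF H x] by auto
        obtain e where e: "e \<in> {1..l}" "x \<in> X e" "y \<in> X e" using nb[OF y(2)] by auto
        have "j \<le> e" using ax(3)[OF e(1)] e unfolding j_def by auto
        then show "Hl m \<inter> X j \<noteq> {}"
          using meets[OF g pd H u y(1) e(3)] aH(1) am e(1) by auto
      qed
    qed
  qed
  show "\<forall>i\<in>{1..c-k}. \<forall>x\<in>S. pd_beta X l (Hu i) \<le> pd_beta X l {x}"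
  proof (intro ballI, rule ccontr)
    fix i x assume i: "i \<in> {1..c-k}" and x: "x \<in> S" and lt: "\<not> pd_beta X l (Hu i) \<le> pd_beta X l {x}"
    define j where "j = pd_beta X l {x}"
    have xV: "{x} \<subseteq> V" using x assms(4) by auto
    note ax = alpha_props[OF pd insert_not_empty xV]
    have j: "j \<in> {1..l}" "x \<in> X j" using ax(4,5) unfolding j_def by auto
    show False
    proof (rule counting[OF g pd assms(3) j(1) j(2) x, of "{i..c}" Hu])
      show "finite {i..c}" "k+1 \<le> card {i..c}" using i assms(6) by auto
      have "{i..c} \<subseteq> {1..c}" using i by auto
      then show "inj_on Hu {i..c}" using inj_on_subset[OF bij_betw_imp_inj_on[OF assms(9)]] by blast
      show Hb: "\<forall>m\<in>{i..c}. Hu m \<in> S_branches V E S" using assms(9) i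
        by (auto simp: bij_betw_def)
      show "\<forall>m\<in>{i..c}. Hu m \<inter> X j \<noteq> {}"
      proof
        fix m assume m: "m \<in> {i..c}"
        have H: "Hu m \<in> S_branches V E S" using Hb m by auto
        note aH = alpha_props[OF pd branch_ne[OF H] bsV[OF H]]
        have "pd_beta X l (Hu i) \<le> pd_beta X l (Hu m)" using assms(10)[rule_format, of i m] m i by simp
        then have am: "j < pd_beta X l (Hu m)" using lt unfolding j_def by simp
        obtain u where u: "u \<in> Hu m" "u \<in> X (pd_beta X l (Hu m))" using aH(5) by auto
        obtain y where y: "y \<in> Hu m" "E x y" using branch_nb[OF H x] by auto
        obtain e where e: "e \<in> {1..l}" "x \<in> X e" "y \<in> X e" using nb[OF y(2)] by auto
        have "e \<le> j" using ax(6)[OF e(1)] e unfolding j_def by auto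
        then show "Hu m \<inter> X j \<noteq> {}"
          using meets[OF g pd H y(1) e(3) u] aH(4) am e(1) by auto
      qed
    qed
  qed
qed

end
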